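(* Let $(A,B,R)$ be a normalized formal context with $A$ and $B$ finite, and let $\{(X_i^*,Y_i^* )\mid i\in I\}$ be the set of all join-irreducible elements of $(\mathcal{C}_N,\leq)$. Then $\{X_i^*\mid i\in I\}$ is a partition of $B$ and $\{Y_i^*\mid i\in I\}$ is a partition of $A$.
   Context: A formal context is a triple $(A,B,R)$ with $R\subseteq A\times B$. The necessity operators are $X^{\uparrow_N}=\{a\in A\mid \text{for all } b\in B,\ (a,b)\in R\Rightarrow b\in X\}$ for $X\subseteq B$, and $Y^{\downarrow^N}=\{b\in B\mid \text{for all } a\in A,\ (a,b)\in R\Rightarrow a\in Y\}$ for $Y\subseteq A$. $\mathcal{C}_N=\{(X,Y)\mid X\subseteq B,\ Y\subseteq A,\ X^{\uparrow_N}=Y,\ Y^{\downarrow^N}=X\}$, ordered by $(X_1,Y_1)\leq(X_2,Y_2)$ iff $X_1\subseteq X_2$ (equivalently $Y_1\subseteq Y_2$); it is a complete lattice with join $(X_1\cup X_2,Y_1\cup Y_2)$, meet $(X_1\cap X_2,Y_1\cap Y_2)$, bottom $(\varnothing,\varnothing)$ and top $(B,A)$. The context is normalized if for every $a\in A$ there are $b,b'\in B$ with $(a,b)\in R$, $(a,b')\notin R$, and for every $b\in B$ there are $a,a'\in A$ with $(a,b)\in R$, $(a',b)\notin R$. An element $x$ of a lattice is join-irreducible if $x$ is not the bottom element and $x=y\vee z$ implies $x=y$ or $x=z$. *)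

theory Defs
  imports Main "HOL-Library.Disjoint_Sets"
begin

definition nec_up :: "'a set \<Rightarrow> 'b set \<Rightarrow> ('a \<times> 'b) set \<Rightarrow> 'b set \<Rightarrow> 'a set" where
  "nec_up A B R X = {a \<in> A. \<forall>b\<in>B. (a, b) \<in> R \<longrightarrow> b \<in> X}"

definition nec_down :: "'a set \<Rightarrow> 'b set \<Rightarrow> ('a \<times> 'b) set \<Rightarrow> 'a set \<Rightarrow> 'b set" where
  "nec_down A B R Y = {b \<in> B. \<forall>a\<in>A. (a, b) \<in> R \<longrightarrow> a \<in> Y}"

definition C_N :: "'a set \<Rightarrow> 'b set \<Rightarrow> ('a \<times> 'b) set \<Rightarrow> ('b set \<times> 'a set) set" where
  "C_N A B R = {(X, Y). X \<subseteq> B \<and> Y \<subseteq> A \<and> nec_up A B R X = Y \<and> nec_down A B R Y = X}"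

definition normalized :: "'a set \<Rightarrow> 'b set \<Rightarrow> ('a \<times> 'b) set \<Rightarrow> bool" where
  "normalized A B R \<longleftrightarrow>
     (\<forall>a\<in>A. \<exists>b\<in>B. \<exists>b'\<in>B. (a, b) \<in> R \<and> (a, b') \<notin> R) \<and>
     (\<forall>b\<in>B. \<exists>a\<in>A. \<exists>a'\<in>A. (a, b) \<in> R \<and> (a', b) \<notin> R)"

definition join_irreducible_N :: "'a set \<Rightarrow> 'b set \<Rightarrow> ('a \<times> 'b) set \<Rightarrow> ('b set \<times> 'a set) set" where
  "join_irreducible_N A B R = {(X, Y). (X, Y) \<in> C_N A B R \<and> (X, Y) \<noteq> ({}, {}) \<and>
     (\<forall>X1 Y1 X2 Y2. (X1, Y1) \<in> C_N A B R \<longrightarrow> (X2, Y2) \<in> C_N A B R \<longrightarrow>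
        (X, Y) = (X1 \<union> X2, Y1 \<union> Y2) \<longrightarrow> (X, Y) = (X1, Y1) \<or> (X, Y) = (X2, Y2))}"

end

theory Submission
  imports Defs
begin

definition clN :: "('a \<times> 'b) set \<Rightarrow> 'b set \<Rightarrow> 'a set \<Rightarrow> bool" where
  "clN R X Y \<longleftrightarrow> (\<forall>a b. (a, b) \<in> R \<longrightarrow> (a \<in> Y \<longleftrightarrow> b \<in> X))"

lemma C_N_iff:
  assumes RAB: "R \<subseteq> A \<times> B" and nz: "normalized A B R"
  shows "(X, Y) \<in> C_N A B R \<longleftrightarrow> X \<subseteq> B \<and> Y \<subseteq> A \<and> clN R X Y"
proof
  assume h: "(X, Y) \<in> C_N A B R"
  hence up: "nec_up A B R X = Y" and dn: "nec_down A B R Y = X" and "X \<subseteq> B" "Y \<subseteq> A"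
    by (auto simp: C_N_def)
  have "clN R X Y"
    unfolding clN_def
  proof (intro allI impI iffI)
    fix a b assume r: "(a, b) \<in> R" "a \<in> Y"
    then show "b \<in> X" using up RAB by (auto simp: nec_up_def)
  next
    fix a b assume r: "(a, b) \<in> R" "b \<in> X"
    then show "a \<in> Y" using dn RAB by (auto simp: nec_down_def)
  qed
  then show "X \<subseteq> B \<and> Y \<subseteq> A \<and> clN R X Y" using \<open>X \<subseteq> B\<close> \<open>Y \<subseteq> A\<close> by blast
next
  assume h: "X \<subseteq> B \<and> Y \<subseteq> A \<and> clN R X Y"
  have "nec_up A B R X = Y"
  proof
    show "nec_up A B R X \<subseteq> Y"
    proof
      fix a assume "a \<in> nec_up A B R X"
      hence a: "a \<in> A" "\<forall>b\<in>B. (a, b) \<in> R \<longrightarrow> b \<in> X" by (auto simp: nec_up_def)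
      then obtain b where "b \<in> B" "(a, b) \<in> R" using nz by (auto simp: normalized_def)
      then show "a \<in> Y" using a h by (auto simp: clN_def)
    qed
    show "Y \<subseteq> nec_up A B R X" using h by (auto simp: clN_def nec_up_def)
  qed
  moreover have "nec_down A B R Y = X"
  proof
    show "nec_down A B R Y \<subseteq> X"
    proof
      fix b assume "b \<in> nec_down A B R Y"
      hence b: "b \<in> B" "\<forall>a\<in>A. (a, b) \<in> R \<longrightarrow> a \<in> Y" by (auto simp: nec_down_def)
      then obtain a where "a \<in> A" "(a, b) \<in> R" using nz by (auto simp: normalized_def)
      then show "b \<in> X" using b h by (auto simp: clN_def)
    qed
    show "X \<subseteq> nec_down A B R Y" using h by (auto simp: clN_def nec_down_def)
  qed
  ultimately show "(X, Y) \<in> C_N A B R" using h by (auto simp: C_N_def)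
qed

lemma dich:
  assumes RAB: "R \<subseteq> A \<times> B" and nz: "normalized A B R"
    and J: "(X, Y) \<in> join_irreducible_N A B R"
    and c: "X' \<subseteq> B" "Y' \<subseteq> A" "clN R X' Y'"
  shows "(X \<subseteq> X' \<and> Y \<subseteq> Y') \<or> (X \<inter> X' = {} \<and> Y \<inter> Y' = {})"
proof -
  have XY: "X \<subseteq> B" "Y \<subseteq> A" "clN R X Y" using J C_N_iff[OF RAB nz]
    by (auto simp: join_irreducible_N_def)
  have 1: "(X \<inter> X', Y \<inter> Y') \<in> C_N A B R" using XY c
    by (subst C_N_iff[OF RAB nz]) (auto simp: clN_def)
  have 2: "(X - X', Y - Y') \<in> C_N A B R" using XY c
    by (subst C_N_iff[OF RAB nz]) (auto simp: clN_def)
  have "(X, Y) = (X \<inter> X' \<union> (X - X'), Y \<inter> Y' \<union> (Y - Y'))" by auto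
  hence "(X, Y) = (X \<inter> X', Y \<inter> Y') \<or> (X, Y) = (X - X', Y - Y')"
    using J 1 2 unfolding join_irreducible_N_def by blast
  then show ?thesis by auto
qed

lemma J_props:
  assumes RAB: "R \<subseteq> A \<times> B" and nz: "normalized A B R"
    and J: "(X, Y) \<in> join_irreducible_N A B R"
  shows "X \<subseteq> B" "Y \<subseteq> A" "clN R X Y" "X \<noteq> {}" "Y \<noteq> {}"
proof -
  show XY: "X \<subseteq> B" "Y \<subseteq> A" "clN R X Y" using J C_N_iff[OF RAB nz]
    by (auto simp: join_irreducible_N_def)
  have ne: "X \<noteq> {} \<or> Y \<noteq> {}" using J by (auto simp: join_irreducible_N_def)
  show "X \<noteq> {}"
  proof
    assume "X = {}"
    with ne obtain a where "a \<in> Y" by auto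
    then have "a \<in> A" using XY by auto
    then obtain b where "(a, b) \<in> R" using nz by (auto simp: normalized_def)
    then show False using \<open>a \<in> Y\<close> \<open>X = {}\<close> XY(3) by (auto simp: clN_def)
  qed
  show "Y \<noteq> {}"
  proof
    assume "Y = {}"
    with ne obtain b where "b \<in> X" by auto
    then have "b \<in> B" using XY by auto
    then obtain a where "(a, b) \<in> R" using nz by (auto simp: normalized_def)
    then show False using \<open>b \<in> X\<close> \<open>Y = {}\<close> XY(3) by (auto simp: clN_def)
  qed
qed

lemma J_eq:
  assumes RAB: "R \<subseteq> A \<times> B" and nz: "normalized A B R"
    and J1: "(X1, Y1) \<in> join_irreducible_N A B R"
    and J2: "(X2, Y2) \<in> join_irreducible_N A B R"
    and ne: "X1 \<inter> X2 \<noteq> {} \<or> Y1 \<inter> Y2 \<noteq> {}"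
  shows "X1 = X2 \<and> Y1 = Y2"
proof -
  note p1 = J_props[OF RAB nz J1] and p2 = J_props[OF RAB nz J2]
  have "X1 \<subseteq> X2 \<and> Y1 \<subseteq> Y2" using dich[OF RAB nz J1 p2(1-3)] ne by blast
  moreover have "X2 \<subseteq> X1 \<and> Y2 \<subseteq> Y1" using dich[OF RAB nz J2 p1(1-3)] ne by blast
  ultimately show ?thesis by blast
qed

lemma exists_J:
  assumes RAB: "R \<subseteq> A \<times> B" and nz: "normalized A B R" and b: "b \<in> B"
  shows "\<exists>X Y. (X, Y) \<in> join_irreducible_N A B R \<and> b \<in> X"
proof -
  define F where "F = {(X, Y). X \<subseteq> B \<and> Y \<subseteq> A \<and> clN R X Y \<and> b \<in> X}"
  define Xb where "Xb = \<Inter>(fst ` F)"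
  define Yb where "Yb = \<Inter>(snd ` F)"
  have BA: "(B, A) \<in> F" using b RAB by (auto simp: F_def clN_def)
  have sub: "Xb \<subseteq> B" "Y b \<subseteq> A" if "False" for Y using that by auto
  have XbB: "Xb \<subseteq> B" using BA unfolding Xb_def by force
  have YbA: "Yb \<subseteq> A" using BA unfolding Yb_def by force
  have bX: "b \<in> Xb" unfolding Xb_def F_def by auto
  have cl: "clN R Xb Yb"
    unfolding clN_def Xb_def Yb_def
  proof (intro allI impI)
    fix a c assume "(a, c) \<in> R"
    then have "\<forall>p\<in>F. (a \<in> snd p \<longleftrightarrow> c \<in> fst p)" unfolding F_def clN_def by auto
    then show "(a \<in> \<Inter>(snd ` F)) = (c \<in> \<Inter>(fst ` F))" by auto
  qed
  have min: "Xb \<subseteq> X \<and> Yb \<subseteq> Y" if "(X, Y) \<in> F" for X Y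
    using that unfolding Xb_def Yb_def by force
  have "(Xb, Yb) \<in> join_irreducible_N A B R"
    unfolding join_irreducible_N_def mem_Collect_eq prod.case
  proof (intro conjI)
    show C: "(Xb, Yb) \<in> C_N A B R" using C_N_iff[OF RAB nz] XbB YbA cl by blast
    show "(Xb, Yb) \<noteq> ({}, {})" using bX by auto
    show "\<forall>X1 Y1 X2 Y2. (X1, Y1) \<in> C_N A B R \<longrightarrow> (X2, Y2) \<in> C_N A B R \<longrightarrow>
        (Xb, Yb) = (X1 \<union> X2, Y1 \<union> Y2) \<longrightarrow> (Xb, Yb) = (X1, Y1) \<or> (Xb, Yb) = (X2, Y2)"
    proof (intro allI impI)
      fix X1 Y1 X2 Y2
      assume c1: "(X1, Y1) \<in> C_N A B R" and c2: "(X2, Y2) \<in> C_N A B R"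
        and eq': "(Xb, Yb) = (X1 \<union> X2, Y1 \<union> Y2)"
      then have eq: "Xb = X1 \<union> X2 \<and> Yb = Y1 \<union> Y2" by simp
      have c1': "X1 \<subseteq> B" "Y1 \<subseteq> A" "clN R X1 Y1" using c1 C_N_iff[OF RAB nz] by auto
      have c2': "X2 \<subseteq> B" "Y2 \<subseteq> A" "clN R X2 Y2" using c2 C_N_iff[OF RAB nz] by auto
      show "(Xb, Yb) = (X1, Y1) \<or> (Xb, Yb) = (X2, Y2)"
      proof (cases "b \<in> X1")
        case True
        then have "(X1, Y1) \<in> F" using c1' by (auto simp: F_def)
        then show ?thesis using min eq by blast
      next
        case False
        then have "b \<in> X2" using eq bX by auto
        then have "(X2, Y2) \<in> F" using c2' by (auto simp: F_def)
        then show ?thesis using min eq by blast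
      qed
    qed
  qed
  then show ?thesis using bX by blast
qed

theorem mainTheorem3:
  fixes A :: "'a set" and B :: "'b set" and R :: "('a \<times> 'b) set"
  assumes "R \<subseteq> A \<times> B"
    and "normalized A B R"
    and "finite A" and "finite B"
  shows "partition_on B (fst ` join_irreducible_N A B R)
       \<and> partition_on A (snd ` join_irreducible_N A B R)"
proof -
  note RAB = assms(1) and nz = assms(2)
  let ?J = "join_irreducible_N A B R"
  have P1: "partition_on B (fst ` ?J)"
    unfolding partition_on_def
  proof (intro conjI)
    show "\<Union>(fst ` ?J) = B"
    proof
      show "\<Union>(fst ` ?J) \<subseteq> B" using J_props[OF RAB nz] by fastforce
      show "B \<subseteq> \<Union>(fst ` ?J)"
      proof
        fix b assume "b \<in> B"
        then obtain X Y where "(X, Y) \<in> ?J" "b \<in> X" using exists_J[OF RAB nz] by blast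
        then show "b \<in> \<Union>(fst ` ?J)" by force
      qed
    qed
    show "disjoint (fst ` ?J)"
    proof (rule disjointI)
      fix S T assume "S \<in> fst ` ?J" "T \<in> fst ` ?J" "S \<noteq> T"
      then obtain X1 Y1 X2 Y2 where "(X1, Y1) \<in> ?J" "(X2, Y2) \<in> ?J"
        "S = X1" "T = X2" by force
      then show "S \<inter> T = {}" using J_eq[OF RAB nz] \<open>S \<noteq> T\<close> by blast
    qed
    show "{} \<notin> fst ` ?J" using J_props[OF RAB nz] by fastforce
  qed
  have P2: "partition_on A (snd ` ?J)"
    unfolding partition_on_def
  proof (intro conjI)
    show "\<Union>(snd ` ?J) = A"
    proof
      show "\<Union>(snd ` ?J) \<subseteq> A" using J_props[OF RAB nz] by fastforce
      show "A \<subseteq> \<Union>(snd ` ?J)"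
      proof
        fix a assume "a \<in> A"
        then obtain b where "(a, b) \<in> R" using nz by (auto simp: normalized_def)
        then have "b \<in> B" using RAB by auto
        then obtain X Y where J: "(X, Y) \<in> ?J" "b \<in> X" using exists_J[OF RAB nz] by blast
        then have "a \<in> Y" using J_props(3)[OF RAB nz J(1)] \<open>(a, b) \<in> R\<close>
          by (auto simp: clN_def)
        then show "a \<in> \<Union>(snd ` ?J)" using J by force
      qed
    qed
    show "disjoint (snd ` ?J)"
    proof (rule disjointI)
      fix S T assume "S \<in> snd ` ?J" "T \<in> snd ` ?J" "S \<noteq> T"
      then obtain X1 Y1 X2 Y2 where "(X1, Y1) \<in> ?J" "(X2, Y2) \<in> ?J"
        "S = Y1" "T = Y2" by force
      then show "S \<inter> T = {}" using J_eq[OF RAB nz] \<open>S \<noteq> T\<close> by blast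
    qed
    show "{} \<notin> snd ` ?J" using J_props[OF RAB nz] by fastforce
  qed
  show ?thesis using P1 P2 by blast
qed

end
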